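(* Let $H\in(\frac12,1)$, $T>0$, let $B^H$ be an $m$-dimensional fractional Brownian motion with Hurst parameter $H$ on $[0,T]$, and for $n\ge1$ let $B^{n,H}_t=\sum_{k=0}^{n-1}\big(B^H_{t_k}+\frac nT(t-t_k)(B^H_{t_{k+1}}-B^H_{t_k})\big)\mathbf 1_{(t_k,t_{k+1}]}(t)$ with $t_k=kT/n$. Then for any $\alpha\in(1-H,\frac12)$, almost surely $$\sup_n\Lambda_\alpha(B^{n,H})<+\infty\quad\text{and}\quad\lim_{n\to\infty}\Lambda_\alpha(B^{n,H}-B^H)=0.$$
   Context: For $g:[0,T]\to\mathbb{R}^m$ in $W_T^{1-\alpha,\infty}$ (measurable with $\sup_{0<s<t<T}\big(\frac{|g(t)-g(s)|}{(t-s)^{1-\alpha}}+\int_s^t\frac{|g(y)-g(s)|}{(y-s)^{2-\alpha}}dy\big)<\infty$), $$\Lambda_\alpha(g)=\frac1{\Gamma(1-\alpha)}\sup_{0<s<t<T}\big|(D_{t-}^{1-\alpha}g_{t-})(s)\big|,$$ where $g_{t-}(s)=g(s)-g(t)$ and $D_{t-}^{1-\alpha}f(s)=\frac{(-1)^{1-\alpha}}{\Gamma(\alpha)}\Big(\frac{f(s)}{(t-s)^{1-\alpha}}+(1-\alpha)\int_s^t\frac{f(s)-f(y)}{(y-s)^{2-\alpha}}dy\Big)$. *)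

theory Defs
  imports "HOL-Probability.Probability"
begin

definition centered_gaussian :: "'a measure \<Rightarrow> ('a \<Rightarrow> real) \<Rightarrow> real \<Rightarrow> bool" where
  "centered_gaussian M X v \<longleftrightarrow>
     (v = 0 \<and> X \<in> borel_measurable M \<and> (AE x in M. X x = 0)) \<or>
     (v > 0 \<and> distributed M lborel X (\<lambda>x. ennreal (normal_density 0 (sqrt v) x)))"

definition fbm_cov :: "real \<Rightarrow> real \<Rightarrow> real \<Rightarrow> real" where
  "fbm_cov H s t = (s powr (2*H) + t powr (2*H) - \<bar>t - s\<bar> powr (2*H)) / 2"

text \<open>m-dimensional fractional Brownian motion on [0,T] (components independent fBm's):
  a family of random vectors, jointly Gaussian (every finite linear combination of
  coordinates is centered Gaussian) with covariance
  E[B_s^i B_t^j] = delta_ij R_H(s,t), with (almost surely) continuous sample paths.\<close>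
definition is_fbm :: "'a measure \<Rightarrow> real \<Rightarrow> real \<Rightarrow> (real \<Rightarrow> 'a \<Rightarrow> real ^ 'm::finite) \<Rightarrow> bool" where
  "is_fbm M H T B \<longleftrightarrow>
     prob_space M \<and>
     (\<forall>t\<in>{0..T}. B t \<in> borel_measurable M) \<and>
     (\<forall>(N::nat) (ts :: nat \<Rightarrow> real) (c :: nat \<Rightarrow> 'm \<Rightarrow> real).
        (\<forall>j<N. ts j \<in> {0..T}) \<longrightarrow>
        centered_gaussian M (\<lambda>\<omega>. \<Sum>j<N. \<Sum>i\<in>UNIV. c j i * (B (ts j) \<omega> $ i))
          (\<Sum>j<N. \<Sum>k<N. \<Sum>i\<in>UNIV. c j i * c k i * fbm_cov H (ts j) (ts k))) \<and>
     (AE \<omega> in M. continuous_on {0..T} (\<lambda>t. B t \<omega>))"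

definition W_space :: "real \<Rightarrow> real \<Rightarrow> (real \<Rightarrow> real ^ 'm::finite) \<Rightarrow> bool" where
  "W_space \<alpha> T g \<longleftrightarrow>
     g \<in> borel_measurable (restrict_space lborel {0..T}) \<and>
     (SUP st \<in> {(s,t). 0 < s \<and> s < t \<and> t < T}.
        ennreal (norm (g (snd st) - g (fst st)) / (snd st - fst st) powr (1 - \<alpha>)) +
        (\<integral>\<^sup>+ y \<in> {fst st..snd st}. ennreal (norm (g y - g (fst st)) / (y - fst st) powr (2 - \<alpha>)) \<partial>lborel))
       < \<infinity>"

text \<open>Lambda_alpha(g) (as an extended real; note |(-1)^(1-alpha)| = 1).\<close>
definition Lambda :: "real \<Rightarrow> real \<Rightarrow> (real \<Rightarrow> real ^ 'm::finite) \<Rightarrow> ereal" where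
  "Lambda \<alpha> T g =
     (SUP st \<in> {(s,t). 0 < s \<and> s < t \<and> t < T}.
        ereal (norm ((1 / Gamma \<alpha>) *\<^sub>R
          ((1 / (snd st - fst st) powr (1 - \<alpha>)) *\<^sub>R (g (fst st) - g (snd st)) +
           (1 - \<alpha>) *\<^sub>R (LINT y:{fst st..snd st}|lborel.
               (1 / (y - fst st) powr (2 - \<alpha>)) *\<^sub>R (g (fst st) - g y))))))
     / ereal (Gamma (1 - \<alpha>))"

definition interp :: "real \<Rightarrow> nat \<Rightarrow> (real \<Rightarrow> real ^ 'm::finite) \<Rightarrow> real \<Rightarrow> real ^ 'm" where
  "interp T n g t = (\<Sum>k<n. indicator {real k * T / n <.. real (k+1) * T / n} t *\<^sub>R
       (g (real k * T / n) + (real n / T * (t - real k * T / n)) *\<^sub>R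
          (g (real (k+1) * T / n) - g (real k * T / n))))"

end

theory Submission
  imports Defs
begin


lemma powr_shift_has_integral:
  fixes s t e :: real
  assumes "s \<le> t" "e > -1"
  shows "((\<lambda>y. (y - s) powr e) has_integral ((t-s) powr (e+1)/(e+1))) {s..t}"
proof -
  have "((\<lambda>x. x powr e) has_integral ((t-s) powr (e+1)/(e+1))) {0..t-s}"
    using has_integral_powr_from_0[OF assms(2)] assms(1) by simp
  from has_integral_shift_real_ivl[OF this, of "-s"] show ?thesis by simp
qed

lemma powr_shift_nn_integral:
  fixes s t e :: real
  assumes "s \<le> t" "e > -1"
  shows "(\<integral>\<^sup>+ y. ennreal (indicator {s..t} y * (y - s) powr e) \<partial>lborel) = ennreal ((t-s) powr (e+1)/(e+1))"
proof -
  have "((\<lambda>y. if y \<in> {s..t} then (y - s) powr e else 0) has_integral ((t-s) powr (e+1)/(e+1))) UNIV"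
    using powr_shift_has_integral[OF assms] by (subst has_integral_restrict_UNIV)
  moreover have "(\<lambda>y. if y \<in> {s..t} then (y - s) powr e else 0) = (\<lambda>y. indicator {s..t} y * (y - s) powr e)"
    by (auto simp: indicator_def)
  ultimately have "((\<lambda>y. indicator {s..t} y * (y - s) powr e) has_integral ((t-s) powr (e+1)/(e+1))) UNIV"
    by simp
  then have "integral\<^sup>N lborel (\<lambda>y. indicator {s..t} y * (y - s) powr e) = ennreal ((t-s) powr (e+1)/(e+1))"
    by (intro nn_integral_has_integral_lborel) auto
  then show ?thesis by simp
qed

lemma powr_shift_set_integrable:
  fixes s t e :: real
  assumes "s \<le> t" "e > -1"
  shows "set_integrable lborel {s..t} (\<lambda>y. (y - s) powr e)"
  unfolding set_integrable_def
proof (rule integrableI_nonneg)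
  show "(\<lambda>x. indicat_real {s..t} x *\<^sub>R (x - s) powr e) \<in> borel_measurable lborel" by measurable
  show "AE x in lborel. 0 \<le> indicat_real {s..t} x *\<^sub>R (x - s) powr e" by auto
  show "(\<integral>\<^sup>+ x. ennreal (indicat_real {s..t} x *\<^sub>R (x - s) powr e) \<partial>lborel) < \<infinity>"
    using powr_shift_nn_integral[OF assms] by simp
qed

lemma powr_shift_set_integral:
  fixes s t e :: real
  assumes "s \<le> t" "e > -1"
  shows "(LINT y:{s..t}|lborel. (y - s) powr e) = (t-s) powr (e+1)/(e+1)"
proof -
  have "(LINT y:{s..t}|lborel. (y - s) powr e) = integral {s..t} (\<lambda>y. (y - s) powr e)"
    by (rule set_borel_integral_eq_integral(2)[OF powr_shift_set_integrable[OF assms]])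
  also have "\<dots> = (t-s) powr (e+1)/(e+1)"
    using powr_shift_has_integral[OF assms] by (rule integral_unique)
  finally show ?thesis .
qed


definition holder_on :: "real set \<Rightarrow> real \<Rightarrow> real \<Rightarrow> (real \<Rightarrow> 'b::real_normed_vector) \<Rightarrow> bool" where
  "holder_on S \<gamma> L g \<longleftrightarrow> (\<forall>s\<in>S. \<forall>t\<in>S. norm (g t - g s) \<le> L * \<bar>t - s\<bar> powr \<gamma>)"

lemma holder_onD:
  "holder_on S \<gamma> L g \<Longrightarrow> s \<in> S \<Longrightarrow> t \<in> S \<Longrightarrow> norm (g t - g s) \<le> L * \<bar>t - s\<bar> powr \<gamma>"
  unfolding holder_on_def by blast

lemma holder_quot:
  fixes g :: "real \<Rightarrow> 'b::real_normed_vector"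
  assumes H: "holder_on S \<gamma> L g" and "s \<in> S" "y \<in> S" "s \<le> y" 
  shows "norm (g y - g s) / (y - s) powr c \<le> L * (y - s) powr (\<gamma> - c)"
proof (cases "y = s")
  case True then show ?thesis by simp
next
  case False
  then have ys: "y - s > 0" using assms by simp
  have "norm (g y - g s) \<le> L * \<bar>y - s\<bar> powr \<gamma>" using H assms(2,3) unfolding holder_on_def by blast
  then have "norm (g y - g s) \<le> L * (y - s) powr \<gamma>" using ys by simp
  then have "norm (g y - g s) / (y - s) powr c \<le> L * (y - s) powr \<gamma> / (y - s) powr c"
    by (intro divide_right_mono) auto
  also have "\<dots> = L * (y - s) powr (\<gamma> - c)" using ys by (simp add: powr_diff)
  finally show ?thesis .
qed


lemma holder_pointwise:
  fixes g :: "real \<Rightarrow> 'b::{banach,second_countable_topology}"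
  assumes \<alpha>: "0 < \<alpha>" "\<alpha> < 1" and \<gamma>: "1 - \<alpha> < \<gamma>" and L: "L \<ge> 0"
    and H: "holder_on {0<..<T} \<gamma> L g"
    and G: "(\<lambda>x. indicator {0..T} x *\<^sub>R g x) \<in> borel_measurable lborel"
    and st: "0 < s" "s < t" "t < T"
  shows "norm (g t - g s) / (t - s) powr (1 - \<alpha>) \<le> L * T powr (\<gamma> - 1 + \<alpha>)"
    and "(\<integral>\<^sup>+ y \<in> {s..t}. ennreal (norm (g y - g s) / (y - s) powr (2 - \<alpha>)) \<partial>lborel)
           \<le> ennreal (L * T powr (\<gamma> - 1 + \<alpha>) / (\<gamma> - 1 + \<alpha>))"
    and "set_integrable lborel {s..t} (\<lambda>y. (1 / (y - s) powr (2 - \<alpha>)) *\<^sub>R (g s - g y))"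
    and "norm (LINT y:{s..t}|lborel. (1 / (y - s) powr (2 - \<alpha>)) *\<^sub>R (g s - g y))
           \<le> L * T powr (\<gamma> - 1 + \<alpha>) / (\<gamma> - 1 + \<alpha>)"
proof -
  define p where "p = \<gamma> - 1 + \<alpha>"
  have p: "p > 0" using \<gamma> by (simp add: p_def)
  have e: "\<gamma> - (2 - \<alpha>) > -1" using \<gamma> by simp
  have pe: "\<gamma> - (2 - \<alpha>) + 1 = p" by (simp add: p_def)
  have tsT: "(t - s) powr p \<le> T powr p" using st p by (intro powr_mono2) auto
  have "norm (g t - g s) / (t - s) powr (1 - \<alpha>) \<le> L * (t - s) powr (\<gamma> - (1 - \<alpha>))"
    using holder_quot[OF H] st by auto
  also have "\<dots> = L * (t - s) powr p" by (simp add: p_def algebra_simps)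
  also have "\<dots> \<le> L * T powr p" using tsT L by (rule mult_left_mono)
  finally show "norm (g t - g s) / (t - s) powr (1 - \<alpha>) \<le> L * T powr (\<gamma> - 1 + \<alpha>)" by (simp add: p_def)
  have pw: "norm (g y - g s) / (y - s) powr (2 - \<alpha>) \<le> L * (y - s) powr (\<gamma> - (2 - \<alpha>))" if "y \<in> {s..t}" for y
    using holder_quot[OF H, of s y] st that by auto
  have "(\<integral>\<^sup>+ y \<in> {s..t}. ennreal (norm (g y - g s) / (y - s) powr (2 - \<alpha>)) \<partial>lborel)
      \<le> (\<integral>\<^sup>+ y. ennreal (L * (indicator {s..t} y * (y - s) powr (\<gamma> - (2 - \<alpha>)))) \<partial>lborel)"
    by (intro nn_integral_mono) (auto simp: indicator_def intro!: ennreal_leI pw)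
  also have "\<dots> = ennreal L * (\<integral>\<^sup>+ y. ennreal (indicator {s..t} y * (y - s) powr (\<gamma> - (2 - \<alpha>))) \<partial>lborel)"
    using L by (subst nn_integral_cmult[symmetric]) (auto simp: ennreal_mult)
  also have "\<dots> = ennreal L * ennreal ((t - s) powr p / p)"
    using powr_shift_nn_integral[OF _ e, of s t] st by (simp add: pe)
  also have "\<dots> = ennreal (L * ((t - s) powr p / p))" using L p by (subst ennreal_mult[symmetric]) auto
  also have "\<dots> \<le> ennreal (L * T powr p / p)"
    using tsT p L by (intro ennreal_leI) (simp add: divide_right_mono mult_left_mono)
  finally show "(\<integral>\<^sup>+ y \<in> {s..t}. ennreal (norm (g y - g s) / (y - s) powr (2 - \<alpha>)) \<partial>lborel)
           \<le> ennreal (L * T powr (\<gamma> - 1 + \<alpha>) / (\<gamma> - 1 + \<alpha>))" by (simp add: p_def)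
  have bint: "set_integrable lborel {s..t} (\<lambda>y. L * (y - s) powr (\<gamma> - (2 - \<alpha>)))"
    using powr_shift_set_integrable[OF _ e, of s t] st by (intro set_integrable_mult_right) auto
  have meas: "(\<lambda>y. indicator {s..t} y *\<^sub>R ((1 / (y - s) powr (2 - \<alpha>)) *\<^sub>R (g s - g y))) \<in> borel_measurable lborel"
  proof -
    have "(\<lambda>y. indicator {s..t} y *\<^sub>R ((1 / (y - s) powr (2 - \<alpha>)) *\<^sub>R (g s - indicator {0..T} y *\<^sub>R g y))) \<in> borel_measurable lborel"
      using G by measurable
    moreover have "(\<lambda>y. indicator {s..t} y *\<^sub>R ((1 / (y - s) powr (2 - \<alpha>)) *\<^sub>R (g s - indicator {0..T} y *\<^sub>R g y)))
       = (\<lambda>y. indicator {s..t} y *\<^sub>R ((1 / (y - s) powr (2 - \<alpha>)) *\<^sub>R (g s - g y)))"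
      using st by (auto simp: indicator_def fun_eq_iff)
    ultimately show ?thesis by simp
  qed
  have nb: "norm ((1 / (y - s) powr (2 - \<alpha>)) *\<^sub>R (g s - g y)) \<le> L * (y - s) powr (\<gamma> - (2 - \<alpha>))"
    if "y \<in> {s..t}" for y
  proof -
    have "norm ((1 / (y - s) powr (2 - \<alpha>)) *\<^sub>R (g s - g y)) = norm (g y - g s) / (y - s) powr (2 - \<alpha>)"
      by (simp add: norm_minus_commute)
    then show ?thesis using pw[OF that] by (simp only:)
  qed
  show si: "set_integrable lborel {s..t} (\<lambda>y. (1 / (y - s) powr (2 - \<alpha>)) *\<^sub>R (g s - g y))"
    unfolding set_integrable_def
  proof (rule Bochner_Integration.integrable_bound)
    show "integrable lborel (\<lambda>y. indicator {s..t} y *\<^sub>R (L * (y - s) powr (\<gamma> - (2 - \<alpha>))))"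
      using bint unfolding set_integrable_def .
    show "(\<lambda>y. indicator {s..t} y *\<^sub>R ((1 / (y - s) powr (2 - \<alpha>)) *\<^sub>R (g s - g y))) \<in> borel_measurable lborel"
      by (rule meas)
    show "AE y in lborel. norm (indicator {s..t} y *\<^sub>R ((1 / (y - s) powr (2 - \<alpha>)) *\<^sub>R (g s - g y)))
        \<le> norm (indicator {s..t} y *\<^sub>R (L * (y - s) powr (\<gamma> - (2 - \<alpha>))))"
    proof (rule AE_I2)
      fix y show "norm (indicator {s..t} y *\<^sub>R ((1 / (y - s) powr (2 - \<alpha>)) *\<^sub>R (g s - g y)))
        \<le> norm (indicator {s..t} y *\<^sub>R (L * (y - s) powr (\<gamma> - (2 - \<alpha>))))"
        using nb[of y] L by (auto simp: indicator_def)
    qed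
  qed
  have "norm (LINT y:{s..t}|lborel. (1 / (y - s) powr (2 - \<alpha>)) *\<^sub>R (g s - g y))
      \<le> (LINT y:{s..t}|lborel. norm ((1 / (y - s) powr (2 - \<alpha>)) *\<^sub>R (g s - g y)))"
    by (rule set_integral_norm_bound[OF si])
  also have "\<dots> \<le> (LINT y:{s..t}|lborel. L * (y - s) powr (\<gamma> - (2 - \<alpha>)))"
    by (intro set_integral_mono set_integrable_norm si bint nb)
  also have "\<dots> = L * (LINT y:{s..t}|lborel. (y - s) powr (\<gamma> - (2 - \<alpha>)))"
    by (simp add: set_integral_mult_right)
  also have "\<dots> = L * ((t - s) powr p / p)"
    using powr_shift_set_integral[OF _ e, of s t] st by (simp add: pe)
  also have "\<dots> \<le> L * T powr p / p"
    using tsT p L by (simp add: divide_right_mono mult_left_mono)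
  finally show "norm (LINT y:{s..t}|lborel. (1 / (y - s) powr (2 - \<alpha>)) *\<^sub>R (g s - g y))
           \<le> L * T powr (\<gamma> - 1 + \<alpha>) / (\<gamma> - 1 + \<alpha>)" by (simp add: p_def)
qed


definition CL :: "real \<Rightarrow> real \<Rightarrow> real \<Rightarrow> real" where
  "CL \<alpha> \<gamma> T = T powr (\<gamma> - 1 + \<alpha>) * (1 + (1 - \<alpha>) / (\<gamma> - 1 + \<alpha>)) / (Gamma \<alpha> * Gamma (1 - \<alpha>))"

lemma holder_W_Lambda:
  fixes g :: "real \<Rightarrow> real ^ 'm::finite"
  assumes \<alpha>: "0 < \<alpha>" "\<alpha> < 1" and \<gamma>: "1 - \<alpha> < \<gamma>" and T: "T > 0" and L: "L \<ge> 0"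
    and H: "holder_on {0<..<T} \<gamma> L g"
    and meas: "g \<in> borel_measurable (restrict_space lborel {0..T})"
  shows "W_space \<alpha> T g" and "Lambda \<alpha> T g \<le> ereal (CL \<alpha> \<gamma> T * L)" and "0 \<le> Lambda \<alpha> T g"
proof -
  define p where "p = \<gamma> - 1 + \<alpha>"
  have p: "p > 0" using \<gamma> by (simp add: p_def)
  have G: "(\<lambda>x. indicator {0..T} x *\<^sub>R g x) \<in> borel_measurable lborel"
    using meas by (subst (asm) borel_measurable_restrict_space_iff) auto
  note PW = holder_pointwise[OF \<alpha> \<gamma> L H G]
  have "(SUP st \<in> {(s,t). 0 < s \<and> s < t \<and> t < T}.
        ennreal (norm (g (snd st) - g (fst st)) / (snd st - fst st) powr (1 - \<alpha>)) +
        (\<integral>\<^sup>+ y \<in> {fst st..snd st}. ennreal (norm (g y - g (fst st)) / (y - fst st) powr (2 - \<alpha>)) \<partial>lborel))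
      \<le> ennreal (L * T powr p) + ennreal (L * T powr p / p)"
  proof (rule SUP_least)
    fix st assume "st \<in> {(s,t). 0 < s \<and> s < t \<and> t < T}"
    then obtain s t where st: "st = (s,t)" "0 < s" "s < t" "t < T" by auto
    show "ennreal (norm (g (snd st) - g (fst st)) / (snd st - fst st) powr (1 - \<alpha>)) +
        (\<integral>\<^sup>+ y \<in> {fst st..snd st}. ennreal (norm (g y - g (fst st)) / (y - fst st) powr (2 - \<alpha>)) \<partial>lborel)
      \<le> ennreal (L * T powr p) + ennreal (L * T powr p / p)"
      using PW(1)[OF st(2-4)] PW(2)[OF st(2-4)] unfolding st(1) p_def
      by (intro add_mono ennreal_leI) auto
  qed
  also have "\<dots> < \<infinity>" by simp
  finally show "W_space \<alpha> T g" unfolding W_space_def using meas by simp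
  define K where "K = (1 / Gamma \<alpha>) * (L * T powr p + (1 - \<alpha>) * (L * T powr p / p))"
  have Ga: "Gamma \<alpha> > 0" using \<alpha> by simp
  have Gb: "Gamma (1 - \<alpha>) > 0" using \<alpha> by simp
  define S where "S = (SUP st \<in> {(s,t). 0 < s \<and> s < t \<and> t < T}.
        ereal (norm ((1 / Gamma \<alpha>) *\<^sub>R
          ((1 / (snd st - fst st) powr (1 - \<alpha>)) *\<^sub>R (g (fst st) - g (snd st)) +
           (1 - \<alpha>) *\<^sub>R (LINT y:{fst st..snd st}|lborel.
               (1 / (y - fst st) powr (2 - \<alpha>)) *\<^sub>R (g (fst st) - g y))))))"
  have LS: "Lambda \<alpha> T g = S / ereal (Gamma (1 - \<alpha>))" unfolding Lambda_def S_def ..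
  have "S \<le> ereal K" unfolding S_def
  proof (rule SUP_least)
    fix st assume "st \<in> {(s,t). 0 < s \<and> s < t \<and> t < T}"
    then obtain s t where st: "st = (s,t)" "0 < s" "s < t" "t < T" by auto
    let ?I = "LINT y:{s..t}|lborel. (1 / (y - s) powr (2 - \<alpha>)) *\<^sub>R (g s - g y)"
    have "norm ((1 / Gamma \<alpha>) *\<^sub>R ((1 / (t - s) powr (1 - \<alpha>)) *\<^sub>R (g s - g t) + (1 - \<alpha>) *\<^sub>R ?I))
        = (1 / Gamma \<alpha>) * norm ((1 / (t - s) powr (1 - \<alpha>)) *\<^sub>R (g s - g t) + (1 - \<alpha>) *\<^sub>R ?I)"
      using Ga by simp
    also have "\<dots> \<le> (1 / Gamma \<alpha>) * (norm ((1 / (t - s) powr (1 - \<alpha>)) *\<^sub>R (g s - g t)) + norm ((1 - \<alpha>) *\<^sub>R ?I))"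
      using Ga by (intro mult_left_mono norm_triangle_ineq) auto
    also have "norm ((1 / (t - s) powr (1 - \<alpha>)) *\<^sub>R (g s - g t)) = norm (g t - g s) / (t - s) powr (1 - \<alpha>)"
      by (simp add: norm_minus_commute)
    also have "norm ((1 - \<alpha>) *\<^sub>R ?I) = (1 - \<alpha>) * norm ?I" using \<alpha> by simp
    also have "(1 / Gamma \<alpha>) * (norm (g t - g s) / (t - s) powr (1 - \<alpha>) + (1 - \<alpha>) * norm ?I) \<le> K"
      unfolding K_def using PW(1)[OF st(2-4)] PW(4)[OF st(2-4)] Ga \<alpha>
      by (intro mult_left_mono add_mono) (auto simp: p_def)
    finally show "ereal (norm ((1 / Gamma \<alpha>) *\<^sub>R
          ((1 / (snd st - fst st) powr (1 - \<alpha>)) *\<^sub>R (g (fst st) - g (snd st)) +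
           (1 - \<alpha>) *\<^sub>R (LINT y:{fst st..snd st}|lborel.
               (1 / (y - fst st) powr (2 - \<alpha>)) *\<^sub>R (g (fst st) - g y))))) \<le> ereal K"
      unfolding st(1) by simp
  qed
  then have "S / ereal (Gamma (1 - \<alpha>)) \<le> ereal K / ereal (Gamma (1 - \<alpha>))"
    using Gb by (intro ereal_divide_right_mono) auto
  also have "ereal K / ereal (Gamma (1 - \<alpha>)) = ereal (CL \<alpha> \<gamma> T * L)"
    using Gb Ga p unfolding K_def CL_def p_def by (simp add: field_simps)
  finally show "Lambda \<alpha> T g \<le> ereal (CL \<alpha> \<gamma> T * L)" unfolding LS .
  have "(T/3, 2*T/3) \<in> {(s,t). 0 < s \<and> s < t \<and> t < T}" using T by auto
  then have "0 \<le> S" unfolding S_def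
    by (rule SUP_upper2) simp
  then have "0 / ereal (Gamma (1 - \<alpha>)) \<le> S / ereal (Gamma (1 - \<alpha>))"
    using Gb by (intro ereal_divide_right_mono) auto
  then show "0 \<le> Lambda \<alpha> T g" unfolding LS by simp
qed


lemma lin_powr_le:
  fixes d h \<beta> :: real
  assumes "0 \<le> d" "d \<le> h" "0 < h" "0 < \<beta>" "\<beta> \<le> 1"
  shows "d / h * h powr \<beta> \<le> d powr \<beta>"
proof (cases "d = 0")
  case True then show ?thesis by simp
next
  case False
  have x: "0 \<le> d / h" "d / h \<le> 1" using assms by auto
  have "d / h = (d / h) powr 1" using x False assms by simp
  also have "\<dots> \<le> (d / h) powr \<beta>" using x assms by (intro powr_mono') auto
  finally have "d / h * h powr \<beta> \<le> (d / h) powr \<beta> * h powr \<beta>"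
    by (intro mult_right_mono) auto
  also have "\<dots> = d powr \<beta>" using assms by (simp add: powr_divide)
  finally show ?thesis .
qed

lemma interp_eq:
  fixes f :: "real \<Rightarrow> real ^ 'm::finite"
  assumes T: "T > 0" and k: "k < n" and t: "real k * T / n < t" "t \<le> real (k+1) * T / n"
  shows "interp T n f t = f (real k * T / n) + (real n / T * (t - real k * T / n)) *\<^sub>R (f (real (k+1) * T / n) - f (real k * T / n))"
proof -
  have n: "real n > 0" using k by simp
  have ind: "indicator {real j * T / n <.. real (j+1) * T / n} t = (if j = k then 1 else (0::real))" for j
  proof (cases "j = k")
    case True then show ?thesis using t by (simp add: indicator_def)
  next
    case False
    show ?thesis
    proof (cases "j < k")
      case True
      then have "real (j+1) \<le> real k" by simp
      then have "real (j+1) * T / n \<le> real k * T / n" using T n by (intro divide_right_mono mult_right_mono) auto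
      then show ?thesis using t False by (auto simp: indicator_def)
    next
      case c: False
      then have "real (k+1) \<le> real j" using False by simp
      then have "real (k+1) * T / n \<le> real j * T / n" using T n by (intro divide_right_mono mult_right_mono) auto
      then show ?thesis using t False by (auto simp: indicator_def)
    qed
  qed
  show ?thesis unfolding interp_def ind using k
    by (simp add: if_distrib[of "\<lambda>c. c *\<^sub>R _"] cong: if_cong)
qed

lemma interp_cover:
  assumes T: "T > 0" and n: "n \<ge> 1" and t: "0 < t" "t \<le> T"
  shows "\<exists>k<n. real k * T / n < t \<and> t \<le> real (k+1) * T / n"
proof -
  define k where "k = nat (\<lceil>t * n / T\<rceil> - 1)"
  have pos: "t * n / T > 0" using T n t by simp
  have c1: "\<lceil>t * n / T\<rceil> \<ge> 1" using pos by linarith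
  have kk: "real k = of_int \<lceil>t * n / T\<rceil> - 1" using c1 unfolding k_def by simp
  have a: "real k < t * n / T" using kk by linarith
  have b: "t * n / T \<le> real k + 1" using kk by linarith
  have le: "t * n / T \<le> n" using t T n by (simp add: field_simps mult_right_mono)
  have "real k < real n" using a le by linarith
  then have "k < n" by simp
  moreover have "real k * T / n < t" using a T n by (simp add: field_simps)
  moreover have "t \<le> real (k+1) * T / n" using b T n by (simp add: field_simps)
  ultimately show ?thesis by blast
qed


lemma interp_piece:
  fixes f :: "real \<Rightarrow> real ^ 'm::finite"
  assumes T: "T > 0" and k: "k < n" and t: "real k * T / n < t" "t \<le> real (k+1) * T / n"
    and H: "holder_on {0..T} \<beta> K f" and \<beta>: "0 < \<beta>" "\<beta> \<le> 1" and K: "K \<ge> 0"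
  shows "norm (interp T n f t - f (real k * T / n)) \<le> K * (t - real k * T / n) powr \<beta>"
    and "norm (interp T n f t - f (real (k+1) * T / n)) \<le> K * (real (k+1) * T / n - t) powr \<beta>"
    and "norm (f (real (k+1) * T / n) - f (real k * T / n)) \<le> K * (T / n) powr \<beta>"
proof -
  have n: "real n > 0" using k by simp
  define a where "a = real k * T / n"
  define b where "b = real (k+1) * T / n"
  define h where "h = T / n"
  have h: "h > 0" using T n by (simp add: h_def)
  have ba: "b - a = h" using n by (simp add: a_def b_def h_def field_simps)
  have a0: "0 \<le> a" using T by (simp add: a_def)
  have "real (k+1) * T \<le> real n * T" using k T by (intro mult_right_mono) auto
  then have bT: "b \<le> T" using n by (simp add: b_def field_simps)
  have fD: "norm (f b - f a) \<le> K * h powr \<beta>"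
  proof -
    have "norm (f b - f a) \<le> K * \<bar>b - a\<bar> powr \<beta>" using a0 bT ba h by (intro holder_onD[OF H]) auto
    then show ?thesis using ba h by simp
  qed
  then show "norm (f (real (k+1) * T / n) - f (real k * T / n)) \<le> K * (T / n) powr \<beta>"
    by (simp add: a_def b_def h_def)
  have ie: "interp T n f t = f a + ((t - a) / h) *\<^sub>R (f b - f a)"
  proof -
    have "interp T n f t = f a + (real n / T * (t - a)) *\<^sub>R (f b - f a)"
      using interp_eq[OF T k t] unfolding a_def b_def .
    moreover have "real n / T * (t - a) = (t - a) / h" using T n by (simp add: h_def)
    ultimately show ?thesis by simp
  qed
  have ta: "a < t" "t \<le> b" using t by (auto simp: a_def b_def)
  have "norm (interp T n f t - f a) = (t - a) / h * norm (f b - f a)"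
    using ie ta h by simp
  also have "\<dots> \<le> (t - a) / h * (K * h powr \<beta>)"
    using ta h by (intro mult_left_mono fD) auto
  also have "\<dots> = K * ((t - a) / h * h powr \<beta>)" by simp
  also have "\<dots> \<le> K * (t - a) powr \<beta>"
    using ta h ba \<beta> K by (intro mult_left_mono lin_powr_le) auto
  finally show "norm (interp T n f t - f (real k * T / n)) \<le> K * (t - real k * T / n) powr \<beta>"
    by (simp add: a_def)
  have "interp T n f t - f b = ((t - a) / h - 1) *\<^sub>R (f b - f a)"
    using ie by (simp add: algebra_simps)
  also have "(t - a) / h - 1 = - ((b - t) / h)" using ba h by (simp add: field_simps)
  finally have "norm (interp T n f t - f b) = (b - t) / h * norm (f b - f a)"
    using ta h by simp
  also have "\<dots> \<le> (b - t) / h * (K * h powr \<beta>)"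
    using ta h by (intro mult_left_mono fD) auto
  also have "\<dots> = K * ((b - t) / h * h powr \<beta>)" by simp
  also have "\<dots> \<le> K * (b - t) powr \<beta>"
    using ta h ba \<beta> K by (intro mult_left_mono lin_powr_le) auto
  finally show "norm (interp T n f t - f (real (k+1) * T / n)) \<le> K * (real (k+1) * T / n - t) powr \<beta>"
    by (simp add: b_def)
qed


lemma holder_onI_sym:
  assumes "\<And>s t. s \<in> S \<Longrightarrow> t \<in> S \<Longrightarrow> s \<le> t \<Longrightarrow> norm (g t - g s) \<le> L * (t - s) powr \<gamma>"
  shows "holder_on S \<gamma> L g"
  unfolding holder_on_def
proof (intro ballI)
  fix s t assume st: "s \<in> S" "t \<in> S"
  show "norm (g t - g s) \<le> L * \<bar>t - s\<bar> powr \<gamma>"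
  proof (cases "s \<le> t")
    case True then show ?thesis using assms[OF st True] by simp
  next
    case False
    then have "norm (g s - g t) \<le> L * (s - t) powr \<gamma>" using assms[OF st(2,1)] by simp
    then show ?thesis using False by (simp add: norm_minus_commute)
  qed
qed

lemma norm_tri3:
  fixes a b c d :: "'b::real_normed_vector"
  shows "norm (a - d) \<le> norm (a - b) + norm (b - c) + norm (c - d)"
proof -
  have "a - d = (a - b) + (b - c) + (c - d)" by simp
  then have "norm (a - d) = norm ((a - b) + (b - c) + (c - d))" by simp
  also have "\<dots> \<le> norm ((a - b) + (b - c)) + norm (c - d)" by (rule norm_triangle_ineq)
  also have "\<dots> \<le> norm (a - b) + norm (b - c) + norm (c - d)" using norm_triangle_ineq[of "a - b" "b - c"] by simp
  finally show ?thesis .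
qed

lemma interp_holder:
  fixes f :: "real \<Rightarrow> real ^ 'm::finite"
  assumes T: "T > 0" and n: "n \<ge> 1"
    and H: "holder_on {0..T} \<beta> K f" and \<beta>: "0 < \<beta>" "\<beta> \<le> 1" and K: "K \<ge> 0"
  shows "holder_on {0<..T} \<beta> (3 * K) (interp T n f)"
proof (rule holder_onI_sym)
  fix s t assume s: "s \<in> {0<..T}" and t: "t \<in> {0<..T}" and st: "s \<le> t"
  have nn: "real n > 0" using n by simp
  obtain j where j: "j < n" "real j * T / n < s" "s \<le> real (j+1) * T / n"
    using interp_cover[OF T n, of s] s by auto
  obtain k where k: "k < n" "real k * T / n < t" "t \<le> real (k+1) * T / n"
    using interp_cover[OF T n, of t] t by auto
  note Pj = interp_piece[OF T j H \<beta> K]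
  note Pk = interp_piece[OF T k H \<beta> K]
  have mono: "real a * T / n \<le> real b * T / n" if "a \<le> b" for a b
    using that T nn by (intro divide_right_mono mult_right_mono) auto
  have jk: "j \<le> k"
  proof (rule ccontr)
    assume "\<not> j \<le> k"
    then have "k + 1 \<le> j" by simp
    from mono[OF this] j k st show False by simp
  qed
  have tsp: "0 \<le> t - s" using st by simp
  show "norm (interp T n f t - interp T n f s) \<le> 3 * K * (t - s) powr \<beta>"
  proof (cases "j = k")
    case True
    define a where "a = real k * T / n"
    define b where "b = real (k+1) * T / n"
    define h where "h = T / n"
    have h: "h > 0" using T nn by (simp add: h_def)
    have ba: "b - a = h" using nn by (simp add: a_def b_def h_def field_simps)
    have et: "interp T n f t = f a + (real n / T * (t - a)) *\<^sub>R (f b - f a)"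
      using interp_eq[OF T k(1) k(2,3)] unfolding a_def b_def .
    have es: "interp T n f s = f a + (real n / T * (s - a)) *\<^sub>R (f b - f a)"
      using interp_eq[OF T k(1), of s] j True unfolding a_def b_def by simp
    have "interp T n f t - interp T n f s = (real n / T * (t - a) - real n / T * (s - a)) *\<^sub>R (f b - f a)"
      unfolding et es scaleR_diff_left by simp
    also have "real n / T * (t - a) - real n / T * (s - a) = real n / T * (t - s)"
      by (simp add: right_diff_distrib)
    finally have "interp T n f t - interp T n f s = (real n / T * (t - s)) *\<^sub>R (f b - f a)" .
    also have "real n / T * (t - s) = (t - s) / h" using T nn by (simp add: h_def)
    finally have "norm (interp T n f t - interp T n f s) = (t - s) / h * norm (f b - f a)"
      using tsp h by simp
    also have "\<dots> \<le> (t - s) / h * (K * h powr \<beta>)"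
      using tsp h Pk(3) unfolding a_def b_def h_def by (intro mult_left_mono divide_nonneg_pos) auto
    also have "\<dots> = K * ((t - s) / h * h powr \<beta>)" by simp
    also have "\<dots> \<le> K * (t - s) powr \<beta>"
    proof -
      have sa: "a < s" using j(2) True by (simp add: a_def)
      have tb: "t \<le> b" using k(3) by (simp add: b_def)
      have tsh: "t - s \<le> h" using sa tb ba by linarith
      have "(t - s) / h * h powr \<beta> \<le> (t - s) powr \<beta>"
        by (rule lin_powr_le[OF tsp tsh h \<beta>])
      then show ?thesis using K by (rule mult_left_mono)
    qed
    also have "\<dots> \<le> 3 * K * (t - s) powr \<beta>" using K by simp
    finally show ?thesis .
  next
    case False
    then have jk1: "j + 1 \<le> k" using jk by simp
    have m: "real (j+1) * T / n \<le> real k * T / n" by (rule mono[OF jk1])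
    have xj0: "0 \<le> real (j+1) * T / n" using T by simp
    have xkT: "real k * T / n \<le> T"
    proof -
      have "real k * T \<le> real n * T" using k T by (intro mult_right_mono) auto
      then show ?thesis using nn by (simp add: field_simps)
    qed
    have "norm (interp T n f t - interp T n f s)
        \<le> norm (interp T n f t - f (real k * T / n)) + norm (f (real k * T / n) - f (real (j+1) * T / n))
           + norm (f (real (j+1) * T / n) - interp T n f s)"
      by (rule norm_tri3)
    also have "\<dots> \<le> K * (t - s) powr \<beta> + K * (t - s) powr \<beta> + K * (t - s) powr \<beta>"
    proof (intro add_mono)
      have "norm (interp T n f t - f (real k * T / n)) \<le> K * (t - real k * T / n) powr \<beta>" by (rule Pk(1))
      also have "\<dots> \<le> K * (t - s) powr \<beta>"
        using K \<beta> k j m by (intro mult_left_mono powr_mono2) auto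
      finally show "norm (interp T n f t - f (real k * T / n)) \<le> K * (t - s) powr \<beta>" .
      have "norm (f (real k * T / n) - f (real (j+1) * T / n)) \<le> K * \<bar>real k * T / n - real (j+1) * T / n\<bar> powr \<beta>"
        using xj0 xkT m by (intro holder_onD[OF H]) auto
      also have "\<dots> \<le> K * (t - s) powr \<beta>"
        using K \<beta> k j m by (intro mult_left_mono powr_mono2) auto
      finally show "norm (f (real k * T / n) - f (real (j+1) * T / n)) \<le> K * (t - s) powr \<beta>" .
      have "norm (f (real (j+1) * T / n) - interp T n f s) \<le> K * (real (j+1) * T / n - s) powr \<beta>"
        using Pj(2) by (simp add: norm_minus_commute)
      also have "\<dots> \<le> K * (t - s) powr \<beta>"
        using K \<beta> k j m by (intro mult_left_mono powr_mono2) auto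
      finally show "norm (f (real (j+1) * T / n) - interp T n f s) \<le> K * (t - s) powr \<beta>" .
    qed
    finally show ?thesis by simp
  qed
qed


lemma interp_sup:
  fixes f :: "real \<Rightarrow> real ^ 'm::finite"
  assumes T: "T > 0" and n: "n \<ge> 1"
    and H: "holder_on {0..T} \<beta> K f" and \<beta>: "0 < \<beta>" "\<beta> \<le> 1" and K: "K \<ge> 0"
    and t: "t \<in> {0<..T}"
  shows "norm (interp T n f t - f t) \<le> 2 * K * (T / n) powr \<beta>"
proof -
  have nn: "real n > 0" using n by simp
  obtain k where k: "k < n" "real k * T / n < t" "t \<le> real (k+1) * T / n"
    using interp_cover[OF T n, of t] t by auto
  note Pk = interp_piece[OF T k H \<beta> K]
  have "real (k+1) * T / n - real k * T / n = T / n" using nn by (simp add: field_simps)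
  then have d: "t - real k * T / n \<le> T / n" using k(3) by linarith
  have "norm (interp T n f t - f t) \<le> norm (interp T n f t - f (real k * T / n)) + norm (f t - f (real k * T / n))"
  proof -
    have "interp T n f t - f t = (interp T n f t - f (real k * T / n)) - (f t - f (real k * T / n))" by simp
    then show ?thesis using norm_triangle_ineq4 by metis
  qed
  also have "\<dots> \<le> K * (T / n) powr \<beta> + K * (T / n) powr \<beta>"
  proof (intro add_mono)
    show "norm (interp T n f t - f (real k * T / n)) \<le> K * (T / n) powr \<beta>"
    proof -
      have "K * (t - real k * T / n) powr \<beta> \<le> K * (T / n) powr \<beta>"
        using K \<beta> k d by (intro mult_left_mono powr_mono2) auto
      then show ?thesis using Pk(1) by linarith
    qed
    have "norm (f t - f (real k * T / n)) \<le> K * \<bar>t - real k * T / n\<bar> powr \<beta>"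
      using t T k(2) by (intro holder_onD[OF H]) auto
    also have "\<dots> \<le> K * (T / n) powr \<beta>"
      using K \<beta> k d by (intro mult_left_mono powr_mono2) auto
    finally show "norm (f t - f (real k * T / n)) \<le> K * (T / n) powr \<beta>" .
  qed
  finally show ?thesis by simp
qed

lemma interp_diff_holder:
  fixes f :: "real \<Rightarrow> real ^ 'm::finite"
  assumes T: "T > 0" and n: "n \<ge> 1"
    and H: "holder_on {0..T} \<beta> K f" and \<beta>: "0 < \<beta>" "\<beta> \<le> 1" and K: "K \<ge> 0"
    and \<beta>': "0 < \<beta>'" "\<beta>' \<le> \<beta>"
  shows "holder_on {0<..T} \<beta>' (4 * K * (T / n) powr (\<beta> - \<beta>')) (\<lambda>t. interp T n f t - f t)"
proof (rule holder_onI_sym)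
  fix s t assume s: "s \<in> {0<..T}" and t: "t \<in> {0<..T}" and st: "s \<le> t"
  define h where "h = T / n"
  have h: "h > 0" using T n by (simp add: h_def)
  define d where "d = t - s"
  have d: "d \<ge> 0" using st by (simp add: d_def)
  let ?g = "\<lambda>t. interp T n f t - f t"
  have b1: "norm (?g t - ?g s) \<le> 4 * K * d powr \<beta>"
  proof -
    have "norm (?g t - ?g s) \<le> norm (interp T n f t - interp T n f s) + norm (f t - f s)"
    proof -
      have "?g t - ?g s = (interp T n f t - interp T n f s) - (f t - f s)" by simp
      then show ?thesis using norm_triangle_ineq4 by metis
    qed
    also have "\<dots> \<le> 3 * K * \<bar>t - s\<bar> powr \<beta> + K * \<bar>t - s\<bar> powr \<beta>"
      using holder_onD[OF interp_holder[OF T n H \<beta> K] s t] holder_onD[OF H, of s t] s t by (intro add_mono) auto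
    finally show ?thesis using st by (simp add: d_def)
  qed
  have b2: "norm (?g t - ?g s) \<le> 4 * K * h powr \<beta>"
  proof -
    have "norm (?g t - ?g s) \<le> norm (?g t) + norm (?g s)" by (rule norm_triangle_ineq4)
    also have "\<dots> \<le> 2 * K * h powr \<beta> + 2 * K * h powr \<beta>"
      using interp_sup[OF T n H \<beta> K s] interp_sup[OF T n H \<beta> K t] by (simp add: h_def)
    finally show ?thesis by simp
  qed
  have split: "x powr \<beta> = x powr \<beta>' * x powr (\<beta> - \<beta>')" for x :: real
    by (simp add: powr_add[symmetric])
  show "norm (?g t - ?g s) \<le> 4 * K * h powr (\<beta> - \<beta>') * (t - s) powr \<beta>'"
    unfolding d_def[symmetric]
  proof (cases "d \<le> h")
    case True
    have "d powr (\<beta> - \<beta>') \<le> h powr (\<beta> - \<beta>')" using True d \<beta>' by (intro powr_mono2) auto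
    then have "d powr \<beta> \<le> d powr \<beta>' * h powr (\<beta> - \<beta>')"
      unfolding split by (intro mult_left_mono) auto
    then have "4 * K * d powr \<beta> \<le> 4 * K * (d powr \<beta>' * h powr (\<beta> - \<beta>'))"
      using K by (intro mult_left_mono) auto
    then show "norm (?g t - ?g s) \<le> 4 * K * h powr (\<beta> - \<beta>') * d powr \<beta>'" using b1 by (simp add: ac_simps)
  next
    case False
    have "h powr \<beta>' \<le> d powr \<beta>'" using False h \<beta>' by (intro powr_mono2) auto
    then have "h powr \<beta> \<le> d powr \<beta>' * h powr (\<beta> - \<beta>')"
      unfolding split by (intro mult_right_mono) auto
    then have "4 * K * h powr \<beta> \<le> 4 * K * (d powr \<beta>' * h powr (\<beta> - \<beta>'))"
      using K by (intro mult_left_mono) auto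
    then show "norm (?g t - ?g s) \<le> 4 * K * h powr (\<beta> - \<beta>') * d powr \<beta>'" using b2 by (simp add: ac_simps)
  qed
qed


lemma holder_on_subset: "holder_on S \<gamma> L g \<Longrightarrow> A \<subseteq> S \<Longrightarrow> holder_on A \<gamma> L g"
  unfolding holder_on_def by blast

lemma interp_measurable:
  fixes f :: "real \<Rightarrow> real ^ 'm::finite"
  shows "interp T n f \<in> borel_measurable lborel"
  unfolding interp_def by measurable

lemma restrict_lborel_meas:
  fixes g :: "real \<Rightarrow> real ^ 'm::finite"
  assumes "g \<in> borel_measurable (restrict_space borel {0..T})"
  shows "g \<in> borel_measurable (restrict_space lborel {0..T})"
proof -
  have "sets (restrict_space lborel {0..T}) = sets (restrict_space borel {0..(T::real)})"
    by (simp add: sets_restrict_space)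
  then show ?thesis using assms measurable_cong_sets by blast
qed

lemma deterministic:
  fixes f :: "real \<Rightarrow> real ^ 'm::finite"
  assumes \<alpha>: "0 < \<alpha>" "\<alpha> < 1" and \<beta>: "1 - \<alpha> < \<beta>'" "\<beta>' < \<beta>" "\<beta> \<le> 1" and T: "T > 0" and K: "K \<ge> 0"
    and H: "holder_on {0..T} \<beta> K f" and C: "continuous_on {0..T} f"
  shows "(\<forall>n\<ge>1. W_space \<alpha> T (interp T n f) \<and> W_space \<alpha> T (\<lambda>t. interp T n f t - f t)) \<and>
     (SUP n\<in>{1..}. Lambda \<alpha> T (interp T n f)) < \<infinity> \<and>
     (\<lambda>n. Lambda \<alpha> T (\<lambda>t. interp T n f t - f t)) \<longlonglongrightarrow> 0"
proof -
  have b0: "0 < \<beta>'" "0 < \<beta>" using \<alpha> \<beta> by auto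
  have fm: "f \<in> borel_measurable (restrict_space lborel {0..T})"
    by (rule restrict_lborel_meas[OF borel_measurable_continuous_on_restrict[OF C]])
  have im: "interp T n f \<in> borel_measurable (restrict_space lborel {0..T})" for n
    by (rule measurable_restrict_space1[OF interp_measurable])
  have dm: "(\<lambda>t. interp T n f t - f t) \<in> borel_measurable (restrict_space lborel {0..T})" for n
    using im[of n] fm by measurable
  have sub: "{0<..<T} \<subseteq> {0<..T}" by auto
  have Hi: "holder_on {0<..<T} \<beta> (3 * K) (interp T n f)" if "n \<ge> 1" for n
    using holder_on_subset[OF interp_holder[OF T that H b0(2) \<beta>(3) K] sub] .
  have Hd: "holder_on {0<..<T} \<beta>' (4 * K * (T / n) powr (\<beta> - \<beta>')) (\<lambda>t. interp T n f t - f t)" if "n \<ge> 1" for n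
    using holder_on_subset[OF interp_diff_holder[OF T that H b0(2) \<beta>(3) K b0(1)] sub] \<beta> by auto
  have g1: "1 - \<alpha> < \<beta>" using \<beta> by simp
  have K3: "3 * K \<ge> 0" using K by simp
  have K4: "4 * K * (T / n) powr (\<beta> - \<beta>') \<ge> 0" for n using K by simp
  note A = holder_W_Lambda[OF \<alpha> g1 T K3 Hi im]
  note D = holder_W_Lambda[OF \<alpha> \<beta>(1) T K4 Hd dm]
  have "(SUP n\<in>{1..}. Lambda \<alpha> T (interp T n f)) \<le> ereal (CL \<alpha> \<beta> T * (3 * K))"
    by (rule SUP_least) (use A(2) in auto)
  moreover have "ereal (CL \<alpha> \<beta> T * (3 * K)) < \<infinity>" by simp
  ultimately have S: "(SUP n\<in>{1..}. Lambda \<alpha> T (interp T n f)) < \<infinity>"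
    by (rule order.strict_trans1)
  have lim0: "(\<lambda>n. ereal (CL \<alpha> \<beta>' T * (4 * K * (T / real n) powr (\<beta> - \<beta>')))) \<longlonglongrightarrow> ereal (CL \<alpha> \<beta>' T * (4 * K * 0))"
  proof (intro tendsto_ereal tendsto_mult tendsto_const)
    show "(\<lambda>n. (T / real n) powr (\<beta> - \<beta>')) \<longlonglongrightarrow> 0"
      by (rule tendsto_zero_powrI[OF lim_const_over_n tendsto_const]) (use T \<beta> in auto)
  qed
  have L: "(\<lambda>n. Lambda \<alpha> T (\<lambda>t. interp T n f t - f t)) \<longlonglongrightarrow> 0"
  proof (rule tendsto_sandwich[OF _ _ tendsto_const])
    show "\<forall>\<^sub>F n in sequentially. 0 \<le> Lambda \<alpha> T (\<lambda>t. interp T n f t - f t)"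
      using D(3) by (intro eventually_sequentiallyI[of 1]) auto
    show "\<forall>\<^sub>F n in sequentially. Lambda \<alpha> T (\<lambda>t. interp T n f t - f t) \<le> ereal (CL \<alpha> \<beta>' T * (4 * K * (T / real n) powr (\<beta> - \<beta>')))"
      using D(2) by (intro eventually_sequentiallyI[of 1]) auto
    show "(\<lambda>n. ereal (CL \<alpha> \<beta>' T * (4 * K * (T / real n) powr (\<beta> - \<beta>')))) \<longlonglongrightarrow> 0"
      using lim0 by (simp add: zero_ereal_def)
  qed
  show ?thesis using A(1) D(1) S L by auto
qed



definition dy :: "nat \<Rightarrow> real \<Rightarrow> real" where
  "dy m x = of_int \<lfloor>2^m * x\<rfloor> / 2^m"

lemma dy_bounds:
  assumes "0 \<le> x"
  shows "0 \<le> dy m x" "dy m x \<le> x" "x - dy m x < 1 / 2^m"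
proof -
  have p: "(2::real)^m > 0" by simp
  have f1: "of_int \<lfloor>2^m * x\<rfloor> \<le> 2^m * x" by (rule of_int_floor_le)
  have f2: "2^m * x < of_int \<lfloor>2^m * x\<rfloor> + 1" by (rule real_of_int_floor_add_one_gt)
  have f0: "0 \<le> \<lfloor>2^m * x\<rfloor>" using assms by simp
  show "0 \<le> dy m x" unfolding dy_def using f0 by simp
  show "dy m x \<le> x" unfolding dy_def using f1 p by (simp add: divide_le_eq mult.commute)
  have "x - of_int \<lfloor>2^m * x\<rfloor> / 2^m = (2^m * x - of_int \<lfloor>2^m * x\<rfloor>) / 2^m" using p by (simp add: field_simps)
  also have "\<dots> < 1 / 2^m" using f2 p by (intro divide_strict_right_mono) linarith+
  finally show "x - dy m x < 1 / 2^m" unfolding dy_def .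
qed

lemma dy_nat:
  assumes "0 \<le> x"
  shows "dy m x = real (nat \<lfloor>2^m * x\<rfloor>) / 2^m"
  using assms unfolding dy_def by simp

lemma dy_step:
  assumes "0 \<le> x"
  shows "dy (Suc m) x = dy m x \<or> (\<exists>j::nat. dy m x = real j / 2^(Suc m) \<and> dy (Suc m) x = real (j+1) / 2^(Suc m))"
proof -
  define a where "a = \<lfloor>2^m * x\<rfloor>"
  define b where "b = \<lfloor>2^(Suc m) * x\<rfloor>"
  have a0: "0 \<le> a" using assms by (simp add: a_def)
  have "of_int a \<le> 2^m * x" unfolding a_def by (rule of_int_floor_le)
  then have "of_int (2 * a) \<le> 2^(Suc m) * x" by simp
  then have l: "2 * a \<le> b" unfolding b_def by (simp add: le_floor_iff)
  have "2^m * x < of_int a + 1" unfolding a_def by (rule real_of_int_floor_add_one_gt)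
  then have "2^(Suc m) * x < of_int (2 * a + 2)" by simp
  moreover have "of_int b \<le> 2^(Suc m) * x" unfolding b_def by (rule of_int_floor_le)
  ultimately have "of_int b < (of_int (2 * a + 2) :: real)" by linarith
  then have u: "b < 2 * a + 2" by linarith
  have dm: "dy m x = of_int (2 * a) / 2^(Suc m)" unfolding dy_def a_def by simp
  have dS: "dy (Suc m) x = of_int b / 2^(Suc m)" unfolding dy_def b_def ..
  show ?thesis
  proof (cases "b = 2 * a")
    case True then show ?thesis using dm dS by simp
  next
    case False
    then have "b = 2 * a + 1" using l u by linarith
    then have "dy m x = real (nat (2 * a)) / 2^(Suc m) \<and> dy (Suc m) x = real (nat (2 * a) + 1) / 2^(Suc m)"
      using dm dS a0 by simp
    then show ?thesis by blast
  qed
qed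


lemma rpow_eq: "((1/2::real) powr \<beta>) ^ m = ((1/2::real) ^ m) powr \<beta>"
proof -
  have "((1/2::real) powr \<beta>) ^ m = (1/2) powr (real m * \<beta>)" by (rule powr_power) simp
  also have "\<dots> = ((1/2::real) powr real m) powr \<beta>" by (simp add: powr_powr)
  also have "(1/2::real) powr real m = (1/2) ^ m" by (rule powr_realpow) simp
  finally show ?thesis .
qed

lemma nat_lt_pow2:
  fixes j m :: nat
  assumes "real (j+1) / 2^m \<le> 1"
  shows "j < 2^m"
proof -
  have "real (j+1) \<le> 2^m" using assms by (simp add: divide_le_eq)
  then have "real (j+1) \<le> real (2^m)" by simp
  then have "j + 1 \<le> 2^m" by (simp only: of_nat_le_iff)
  then show ?thesis by simp
qed

lemma chaining:
  fixes f :: "real \<Rightarrow> real" and \<beta> r :: real and N :: nat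
  assumes C: "continuous_on {0..1} f" and \<beta>: "0 < \<beta>" and r: "r = (1/2) powr \<beta>"
    and hyp: "\<forall>n\<ge>N. \<forall>j<2^n. \<bar>f (real (j+1) / 2^n) - f (real j / 2^n)\<bar> \<le> r^n"
  shows "\<exists>K. \<forall>x\<in>{0..1}. \<forall>y\<in>{0..1}. \<bar>f x - f y\<bar> \<le> K * \<bar>x - y\<bar> powr \<beta>"
proof -
  have "(1/2::real) powr \<beta> < 1 powr \<beta>" using \<beta> by (intro powr_less_mono2) auto
  then have r0: "0 < r" "r < 1" unfolding r by auto
  have S1: "\<bar>f (dy (Suc m) x) - f (dy m x)\<bar> \<le> r^(Suc m)" if x: "0 \<le> x" "x \<le> 1" and m: "N \<le> m" for x m
  proof -
    from dy_step[OF x(1), of m] show ?thesis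
    proof
      assume "dy (Suc m) x = dy m x" then show ?thesis using r0 by simp
    next
      assume "\<exists>j::nat. dy m x = real j / 2^(Suc m) \<and> dy (Suc m) x = real (j+1) / 2^(Suc m)"
      then obtain j :: nat where j: "dy m x = real j / 2^(Suc m)" "dy (Suc m) x = real (j+1) / 2^(Suc m)" by blast
      have "real (j+1) / 2^(Suc m) \<le> 1" using j(2) dy_bounds(2)[OF x(1), of "Suc m"] x(2) by linarith
      then have "j < 2^(Suc m)" by (rule nat_lt_pow2)
      moreover have "N \<le> Suc m" using m by simp
      ultimately have "\<bar>f (real (j+1) / 2^(Suc m)) - f (real j / 2^(Suc m))\<bar> \<le> r^(Suc m)"
        using hyp by blast
      then show ?thesis using j by simp
    qed
  qed
  have S2: "\<bar>f (dy (m + p) x) - f (dy m x)\<bar> \<le> r^(Suc m) * (1 - r^p) / (1 - r)"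
    if x: "0 \<le> x" "x \<le> 1" and m: "N \<le> m" for x m p
  proof (induction p)
    case 0 then show ?case by simp
  next
    case (Suc p)
    have "\<bar>f (dy (m + Suc p) x) - f (dy m x)\<bar> \<le> \<bar>f (dy (Suc (m + p)) x) - f (dy (m + p) x)\<bar> + \<bar>f (dy (m + p) x) - f (dy m x)\<bar>"
      by simp
    also have "\<dots> \<le> r^(Suc (m + p)) + r^(Suc m) * (1 - r^p) / (1 - r)"
      using S1[OF x, of "m + p"] m Suc.IH by simp
    also have "\<dots> = r^(Suc m) * (1 - r^(Suc p)) / (1 - r)"
      using r0 by (simp add: field_simps power_add)
    finally show ?case .
  qed
  have S3: "\<bar>f x - f (dy m x)\<bar> \<le> r^m / (1 - r)" if x: "0 \<le> x" "x \<le> 1" and m: "N \<le> m" for x m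
  proof -
    have dl: "(\<lambda>p. dy p x) \<longlonglongrightarrow> x"
    proof (rule tendsto_sandwich[of "\<lambda>p. x - (1/2)^p" _ _ "\<lambda>p. x"])
      show "\<forall>\<^sub>F p in sequentially. x - (1/2)^p \<le> dy p x"
      proof (intro always_eventually allI)
        fix p
        have "x - dy p x < 1 / 2^p" by (rule dy_bounds(3)[OF x(1)])
        then show "x - (1/2)^p \<le> dy p x" by (simp add: power_one_over)
      qed
      show "\<forall>\<^sub>F p in sequentially. dy p x \<le> x"
        using dy_bounds(2)[OF x(1)] by auto
      have "(\<lambda>p. x - (1/2::real)^p) \<longlonglongrightarrow> x - 0"
        by (intro tendsto_diff tendsto_const LIMSEQ_power_zero) simp
      then show "(\<lambda>p. x - (1/2::real)^p) \<longlonglongrightarrow> x" by simp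
    qed simp
    have fl: "(\<lambda>p. f (dy p x)) \<longlonglongrightarrow> f x"
    proof (rule continuous_on_tendsto_compose[OF C dl])
      show "x \<in> {0..1}" using x by simp
      show "\<forall>\<^sub>F p in sequentially. dy p x \<in> {0..1}"
      proof (intro always_eventually allI)
        fix p show "dy p x \<in> {0..1}" using x dy_bounds(1,2)[OF x(1), of p] by simp
      qed
    qed
    have "(\<lambda>p. \<bar>f (dy p x) - f (dy m x)\<bar>) \<longlonglongrightarrow> \<bar>f x - f (dy m x)\<bar>"
      by (intro tendsto_rabs tendsto_diff fl tendsto_const)
    moreover have "\<exists>N'. \<forall>p\<ge>N'. \<bar>f (dy p x) - f (dy m x)\<bar> \<le> r^m / (1 - r)"
    proof (intro exI allI impI)
      fix p assume "m \<le> p"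
      then obtain q where q: "p = m + q" using le_Suc_ex by blast
      have "\<bar>f (dy p x) - f (dy m x)\<bar> \<le> r^(Suc m) * (1 - r^q) / (1 - r)" using S2[OF x m] q by simp
      also have "\<dots> \<le> r^m / (1 - r)"
      proof -
        have "r^(Suc m) * (1 - r^q) \<le> r^m"
        proof -
          have "r^(Suc m) * (1 - r^q) \<le> r^(Suc m) * 1" using r0 by (intro mult_left_mono) auto
          also have "\<dots> \<le> r^m" using r0 by (simp add: power_Suc mult_left_le_one_le)
          finally show ?thesis .
        qed
        then show ?thesis using r0 by (intro divide_right_mono) auto
      qed
      finally show "\<bar>f (dy p x) - f (dy m x)\<bar> \<le> r^m / (1 - r)" .
    qed
    ultimately show ?thesis by (rule LIMSEQ_le_const2)
  qed
  have S4: "\<bar>f (dy m x) - f (dy m y)\<bar> \<le> r^m"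
    if x: "0 \<le> y" "y \<le> x" "x \<le> 1" and d: "x - y \<le> 1/2^m" and m: "N \<le> m" for x y m
  proof -
    define a where "a = \<lfloor>2^m * x\<rfloor>"
    define b where "b = \<lfloor>2^m * y\<rfloor>"
    have "2^m * y \<le> 2^m * x" using x by simp
    then have ba: "b \<le> a" unfolding a_def b_def by (rule floor_mono)
    have "2^m * x \<le> 2^m * y + 1" using d by (simp add: field_simps)
    then have "a \<le> \<lfloor>2^m * y + 1\<rfloor>" unfolding a_def by (rule floor_mono)
    then have ab: "a \<le> b + 1" unfolding b_def by simp
    have b0: "0 \<le> b" using x unfolding b_def by simp
    show ?thesis
    proof (cases "a = b")
      case True
      then have "dy m x = dy m y" unfolding dy_def a_def b_def by simp
      then show ?thesis using r0 by simp
    next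
      case False
      then have a1: "a = b + 1" using ab ba by simp
      define j where "j = nat b"
      have dyy: "dy m y = real j / 2^m" using b0 unfolding dy_def b_def[symmetric] j_def by simp
      have dyx: "dy m x = real (j+1) / 2^m" using b0 a1 unfolding dy_def a_def[symmetric] j_def by simp
      have "real (j+1) / 2^m \<le> 1" using dyx dy_bounds(2)[of x m] x by linarith
      then have "j < 2^m" by (rule nat_lt_pow2)
      then have "\<bar>f (real (j+1) / 2^m) - f (real j / 2^m)\<bar> \<le> r^m" using hyp m by blast
      then show ?thesis using dyx dyy by simp
    qed
  qed
  have S5: "\<bar>f x - f y\<bar> \<le> r^m * (1 + 2 / (1 - r))"
    if x: "0 \<le> y" "y \<le> x" "x \<le> 1" and d: "x - y \<le> 1/2^m" and m: "N \<le> m" for x y m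
  proof -
    have "\<bar>f x - f y\<bar> \<le> \<bar>f x - f (dy m x)\<bar> + \<bar>f (dy m x) - f (dy m y)\<bar> + \<bar>f (dy m y) - f y\<bar>" by simp
    also have "\<dots> \<le> r^m / (1 - r) + r^m + r^m / (1 - r)"
      using S3[of x m] S3[of y m] S4[OF x d m] x m by (intro add_mono) auto
    also have "\<dots> = r^m * (1 + 2 / (1 - r))"
    proof -
      have g: "a / q + a + a / q = a * (1 + 2 / q)" if "q \<noteq> 0" for a q :: real
        using that by (simp add: field_simps)
      show ?thesis using r0 by (intro g) auto
    qed
    finally show ?thesis .
  qed
  obtain M where M: "\<And>x. x \<in> {0..1} \<Longrightarrow> \<bar>f x\<bar> \<le> M"
    using compact_imp_bounded[OF compact_continuous_image[OF C compact_Icc]]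
    unfolding bounded_iff by force
  have M0: "0 \<le> M" using M[of 0] by simp
  define c where "c = ((1/2::real)^N) powr \<beta>"
  have c0: "c > 0" unfolding c_def by simp
  define K where "K = (1 + 2 / (1 - r)) * 2 powr \<beta> + 2 * M / c"
  have K1: "0 \<le> (1 + 2 / (1 - r)) * 2 powr \<beta>" using r0 by simp
  have K2: "0 \<le> 2 * M / c" using M0 c0 by simp
  have main: "\<bar>f x - f y\<bar> \<le> K * (x - y) powr \<beta>" if x: "0 \<le> y" "y \<le> x" "x \<le> 1" for x y
  proof (cases "x = y")
    case True then show ?thesis by simp
  next
    case False
    define d where "d = x - y"
    have d0: "d > 0" using x False by (simp add: d_def)
    show ?thesis
    proof (cases "d \<le> (1/2)^N")
      case True
      have ex: "\<exists>n. (1/2::real)^n < d" using real_arch_pow_inv[OF d0, of "1/2"] by simp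
      have "(1/2::real)^N \<le> 1" by (rule power_le_one) auto
      then have np: "\<not> (1/2::real)^0 < d" using True by simp
      obtain m where m: "\<not> (1/2::real)^m < d" "(1/2::real)^(Suc m) < d"
        using exists_least_lemma[of "\<lambda>n. (1/2::real)^n < d", OF np ex] by blast
      have mN: "N \<le> m"
      proof (rule ccontr)
        assume "\<not> N \<le> m"
        then have "Suc m \<le> N" by simp
        then have "(1/2::real)^N \<le> (1/2)^(Suc m)" by (intro power_decreasing) auto
        then show False using m(2) True by simp
      qed
      have dm: "x - y \<le> 1/2^m" using m(1) by (simp add: d_def power_one_over)
      have e1: "\<bar>f x - f y\<bar> \<le> r^m * (1 + 2 / (1 - r))" by (rule S5[OF x dm mN])
      have "r^m = ((1/2::real)^m) powr \<beta>" unfolding r by (rule rpow_eq)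
      also have "\<dots> \<le> (2 * d) powr \<beta>"
        using m(2) \<beta> by (intro powr_mono2) auto
      also have "\<dots> = 2 powr \<beta> * d powr \<beta>" by (simp add: powr_mult)
      finally have e2: "r^m \<le> 2 powr \<beta> * d powr \<beta>" .
      have cc: "0 \<le> 1 + 2 / (1 - r)" using r0 by simp
      have e3: "\<bar>f x - f y\<bar> \<le> (2 powr \<beta> * d powr \<beta>) * (1 + 2 / (1 - r))"
        by (rule order.trans[OF e1 mult_right_mono[OF e2 cc]])
      have e4: "(2 powr \<beta> * d powr \<beta>) * (1 + 2 / (1 - r)) = (1 + 2 / (1 - r)) * 2 powr \<beta> * d powr \<beta>"
        by (simp only: mult_ac)
      have "\<bar>f x - f y\<bar> \<le> (1 + 2 / (1 - r)) * 2 powr \<beta> * d powr \<beta>"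
        using e3 unfolding e4 .
      also have "\<dots> \<le> K * d powr \<beta>" unfolding K_def using K2 by (intro mult_right_mono) auto
      finally show ?thesis by (simp add: d_def)
    next
      case False
      have "c \<le> d powr \<beta>" unfolding c_def using False \<beta> by (intro powr_mono2) auto
      have "\<bar>f x - f y\<bar> \<le> 2 * M" using M[of x] M[of y] x by fastforce
      also have "\<dots> = 2 * M / c * c" using c0 by simp
      also have "\<dots> \<le> 2 * M / c * d powr \<beta>" using \<open>c \<le> d powr \<beta>\<close> K2 by (intro mult_left_mono) auto
      also have "\<dots> \<le> K * d powr \<beta>" unfolding K_def using K1 by (intro mult_right_mono) auto
      finally show ?thesis by (simp add: d_def)
    qed
  qed
  show ?thesis
  proof (intro exI ballI)
    fix x y :: real assume x: "x \<in> {0..1}" and y: "y \<in> {0..1}"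
    show "\<bar>f x - f y\<bar> \<le> K * \<bar>x - y\<bar> powr \<beta>"
    proof (cases "y \<le> x")
      case True then show ?thesis using main[of y x] x y by simp
    next
      case False then show ?thesis using main[of x y] x y by (simp add: abs_minus_commute)
    qed
  qed
qed



lemma gauss_tail:
  assumes P: "prob_space M" and D: "distributed M lborel X (\<lambda>x. ennreal (normal_density 0 \<sigma> x))"
    and \<delta>: "\<delta> > 0" and \<sigma>: "\<sigma> > 0"
  shows "measure M {\<omega>\<in>space M. \<delta> \<le> \<bar>X \<omega>\<bar>} \<le> fact (2*k) / ((2/\<sigma>\<^sup>2)^k * fact k) / \<delta>^(2*k)"
proof -
  interpret prob_space M by (rule P)
  have Xm: "X \<in> borel_measurable M" using distributed_measurable[OF D] by simp
  define A where "A = {x::real. \<delta> \<le> \<bar>x\<bar>}"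
  have Am: "A \<in> sets lborel" unfolding A_def by measurable
  have eqs: "{\<omega>\<in>space M. \<delta> \<le> \<bar>X \<omega>\<bar>} = X -` A \<inter> space M" unfolding A_def by auto
  define C where "C = fact (2*k) / ((2/\<sigma>\<^sup>2)^k * fact k) / \<delta>^(2*k)"
  have int: "integrable lborel (\<lambda>x. normal_density 0 \<sigma> x * x^(2*k) / \<delta>^(2*k))"
  proof -
    have "integrable lborel (\<lambda>x. normal_density 0 \<sigma> x * (x - 0)^(2*k))" using \<sigma> by (rule integrable_normal_moment)
    then show ?thesis by (intro integrable_divide) simp
  qed
  have ival: "(\<integral>x. normal_density 0 \<sigma> x * x^(2*k) / \<delta>^(2*k) \<partial>lborel) = C"
  proof -
    have "(\<integral>x. normal_density 0 \<sigma> x * (x - 0)^(2*k) \<partial>lborel) = fact (2*k) / ((2/\<sigma>\<^sup>2)^k * fact k)"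
      using \<sigma> by (rule integral_normal_moment_even)
    then show ?thesis unfolding C_def by simp
  qed
  have "emeasure M (X -` A \<inter> space M) = (\<integral>\<^sup>+x. ennreal (normal_density 0 \<sigma> x) * indicator A x \<partial>lborel)"
    by (rule distributed_emeasure[OF D Am])
  also have "\<dots> \<le> (\<integral>\<^sup>+x. ennreal (normal_density 0 \<sigma> x * x^(2*k) / \<delta>^(2*k)) \<partial>lborel)"
  proof (intro nn_integral_mono)
    fix x :: real
    show "ennreal (normal_density 0 \<sigma> x) * indicator A x \<le> ennreal (normal_density 0 \<sigma> x * x^(2*k) / \<delta>^(2*k))"
    proof (cases "x \<in> A")
      case True
      then have "\<delta>^(2*k) \<le> \<bar>x\<bar>^(2*k)" using \<delta> unfolding A_def by (intro power_mono) auto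
      then have "1 \<le> x^(2*k) / \<delta>^(2*k)" using \<delta> by (simp add: power_even_abs)
      then have "normal_density 0 \<sigma> x * 1 \<le> normal_density 0 \<sigma> x * (x^(2*k) / \<delta>^(2*k))"
        by (intro mult_left_mono) auto
      then have le: "normal_density 0 \<sigma> x \<le> normal_density 0 \<sigma> x * x^(2*k) / \<delta>^(2*k)" by simp
      have "ennreal (normal_density 0 \<sigma> x) * indicator A x = ennreal (normal_density 0 \<sigma> x)"
        using True by simp
      then show ?thesis using le by (simp only: ennreal_leI)
    next
      case False then show ?thesis by simp
    qed
  qed
  also have "\<dots> = ennreal C"
    using int ival by (subst nn_integral_eq_integral) (auto)
  finally have "emeasure M {\<omega>\<in>space M. \<delta> \<le> \<bar>X \<omega>\<bar>} \<le> ennreal C" using eqs by simp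
  moreover have "C \<ge> 0" unfolding C_def using \<delta> by simp
  ultimately show ?thesis unfolding C_def[symmetric]
    by (simp add: emeasure_eq_measure)
qed


lemma fbm_cov_diag: "t \<ge> 0 \<Longrightarrow> fbm_cov H t t = t powr (2*H)"
  unfolding fbm_cov_def by simp

lemma fbm_cov_sym: "fbm_cov H s t = fbm_cov H t s"
  unfolding fbm_cov_def by (simp add: abs_minus_commute add.commute)

lemma fbm_increment:
  fixes B :: "real \<Rightarrow> 'a \<Rightarrow> real ^ 'm::finite"
  assumes B: "is_fbm M H T B" and s: "s \<in> {0..T}" and t: "t \<in> {0..T}" and st: "s \<noteq> t"
  shows "distributed M lborel (\<lambda>\<omega>. B t \<omega> $ i - B s \<omega> $ i)
           (\<lambda>x. ennreal (normal_density 0 (sqrt (\<bar>t - s\<bar> powr (2*H))) x))"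
proof -
  define ts where "ts = (\<lambda>j::nat. if j = 0 then t else s)"
  define c where "c = (\<lambda>(j::nat) (i'::'m). if i' = i then (if j = 0 then 1 else -1) else (0::real))"
  have "\<forall>j<2. ts j \<in> {0..T}" using s t by (simp add: ts_def)
  then have G: "centered_gaussian M (\<lambda>\<omega>. \<Sum>j<2. \<Sum>i'\<in>UNIV. c j i' * (B (ts j) \<omega> $ i'))
          (\<Sum>j<2. \<Sum>k<2. \<Sum>i'\<in>UNIV. c j i' * c k i' * fbm_cov H (ts j) (ts k))"
    using B unfolding is_fbm_def by blast
  have sum2: "(\<Sum>j<(2::nat). g j) = g 0 + g 1" for g :: "nat \<Rightarrow> real"
    by (simp add: numeral_2_eq_2)
  have inner: "(\<Sum>i'\<in>UNIV. (if i' = i then a else 0) * x i') = a * x i" for a :: real and x :: "'m \<Rightarrow> real"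
    by (simp add: if_distrib[of "\<lambda>z. z * _"] cong: if_cong)
  have inner2: "(\<Sum>i'\<in>UNIV. (if i' = i then a else 0) * (if i' = i then b else 0) * x) = a * b * x" for a b x :: real
  proof -
    have "(\<Sum>i'\<in>UNIV. (if i' = i then a else 0) * (if i' = i then b else 0) * x) = (\<Sum>i'\<in>UNIV. if i' = i then a * b * x else 0)"
      by (intro sum.cong) auto
    then show ?thesis by simp
  qed
  have f_eq: "(\<lambda>\<omega>. \<Sum>j<2. \<Sum>i'\<in>UNIV. c j i' * (B (ts j) \<omega> $ i')) = (\<lambda>\<omega>. B t \<omega> $ i - B s \<omega> $ i)"
  proof
    fix \<omega>
    have c0: "c 0 = (\<lambda>i'. if i' = i then 1 else 0)" and c1: "c 1 = (\<lambda>i'. if i' = i then -1 else 0)"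
      by (auto simp: c_def)
    show "(\<Sum>j<2. \<Sum>i'\<in>UNIV. c j i' * (B (ts j) \<omega> $ i')) = B t \<omega> $ i - B s \<omega> $ i"
      unfolding sum2 c0 c1 inner by (simp add: ts_def)
  qed
  have v_eq: "(\<Sum>j<2. \<Sum>k<2. \<Sum>i'\<in>UNIV. c j i' * c k i' * fbm_cov H (ts j) (ts k)) = \<bar>t - s\<bar> powr (2*H)"
  proof -
    have c0: "c 0 = (\<lambda>i'. if i' = i then 1 else 0)" and c1: "c 1 = (\<lambda>i'. if i' = i then -1 else 0)"
      by (auto simp: c_def)
    have "(\<Sum>j<2. \<Sum>k<2. \<Sum>i'\<in>UNIV. c j i' * c k i' * fbm_cov H (ts j) (ts k))
        = fbm_cov H t t - fbm_cov H t s - fbm_cov H s t + fbm_cov H s s"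
      unfolding sum2 c0 c1 inner2 by (simp add: ts_def)
    also have "\<dots> = \<bar>t - s\<bar> powr (2*H)"
      using s t unfolding fbm_cov_diag[of t H] fbm_cov_diag[of s H] fbm_cov_sym[of H s t]
      by (simp add: fbm_cov_def abs_minus_commute)
    finally show ?thesis .
  qed
  have vpos: "\<bar>t - s\<bar> powr (2*H) > 0" using st by simp
  show ?thesis using G vpos unfolding f_eq v_eq centered_gaussian_def by auto
qed



lemma per_j_bound:
  fixes B :: "real \<Rightarrow> 'a \<Rightarrow> real ^ 'm::finite"
  assumes B: "is_fbm M H T B" and T: "T > 0" and \<beta>: "0 < \<beta>" and k: "k > 0"
    and j: "j < (2::nat)^n"
  shows "measure M {\<omega>\<in>space M. ((1/2) powr \<beta>)^n \<le> \<bar>B (T * (real (j+1) / 2^n)) \<omega> $ i - B (T * (real j / 2^n)) \<omega> $ i\<bar>}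
     \<le> fact (2*k) / (2^k * fact k) * T powr (2*H*k) * ((1/2) powr (2*k*(H-\<beta>)))^n"
proof -
  have P: "prob_space M" using B unfolding is_fbm_def by blast
  define u where "u = (1/2::real)^n"
  have u0: "u > 0" by (simp add: u_def)
  define t where "t = T * (real (j+1) / 2^n)"
  define s where "s = T * (real j / 2^n)"
  have jle: "real (j+1) \<le> 2^n"
  proof -
    have "j + 1 \<le> 2^n" using j by simp
    then have "real (j+1) \<le> real (2^n)" by (simp only: of_nat_le_iff)
    then show ?thesis by simp
  qed
  have q1: "real (j+1) / 2^n \<le> 1" using jle by simp
  have "real j \<le> 2^n" using jle by linarith
  then have q2: "real j / 2^n \<le> 1" by (simp add: divide_le_eq)
  have "T * (real (j+1) / 2^n) \<le> T * 1" using T q1 by (intro mult_left_mono) auto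
  then have tT: "t \<in> {0..T}" using T unfolding t_def by simp
  have "T * (real j / 2^n) \<le> T * 1" using T q2 by (intro mult_left_mono) auto
  then have sT: "s \<in> {0..T}" using T unfolding s_def by simp
  have ts: "t - s = T * u" unfolding t_def s_def u_def by (simp add: field_simps power_one_over)
  have tsn: "s \<noteq> t" using ts T u0 by auto
  define v where "v = (T * u) powr (2*H)"
  have v0: "v > 0" using T u0 by (simp add: v_def)
  define \<sigma> where "\<sigma> = sqrt v"
  have \<sigma>0: "\<sigma> > 0" using v0 by (simp add: \<sigma>_def)
  have \<sigma>2: "\<sigma>\<^sup>2 = v" using v0 by (simp add: \<sigma>_def)
  have D: "distributed M lborel (\<lambda>\<omega>. B t \<omega> $ i - B s \<omega> $ i) (\<lambda>x. ennreal (normal_density 0 \<sigma> x))"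
    using fbm_increment[OF B sT tT tsn, of i] ts T u0 by (simp add: \<sigma>_def v_def)
  define \<delta> where "\<delta> = ((1/2::real) powr \<beta>)^n"
  have \<delta>u: "\<delta> = u powr \<beta>" unfolding \<delta>_def u_def by (rule rpow_eq)
  have \<delta>0: "\<delta> > 0" using u0 by (simp add: \<delta>u)
  have "measure M {\<omega>\<in>space M. \<delta> \<le> \<bar>B t \<omega> $ i - B s \<omega> $ i\<bar>} \<le> fact (2*k) / ((2/\<sigma>\<^sup>2)^k * fact k) / \<delta>^(2*k)"
    by (rule gauss_tail[OF P D \<delta>0 \<sigma>0])
  also have "fact (2*k) / ((2/\<sigma>\<^sup>2)^k * fact k) / \<delta>^(2*k)
      = fact (2*k) / (2^k * fact k) * (v^k / \<delta>^(2*k))"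
    unfolding \<sigma>2 using v0 \<delta>0 by (simp add: field_simps power_divide)
  also have "v^k = T powr (2*H*k) * u powr (2*H*k)"
  proof -
    have "v^k = (T * u) powr (real k * (2*H))" unfolding v_def using T u0 by (intro powr_power) simp
    also have "\<dots> = T powr (2*H*k) * u powr (2*H*k)" using T u0 by (simp add: powr_mult ac_simps)
    finally show ?thesis .
  qed
  also have "\<delta>^(2*k) = u powr (2*k*\<beta>)"
  proof -
    have "\<delta>^(2*k) = (u powr \<beta>)^(2*k)" by (simp add: \<delta>u)
    also have "\<dots> = u powr (real (2*k) * \<beta>)" using u0 by (intro powr_power) simp
    finally show ?thesis by simp
  qed
  also have "T powr (2*H*k) * u powr (2*H*k) / u powr (2*k*\<beta>) = T powr (2*H*k) * u powr (2*k*(H-\<beta>))"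
  proof -
    have "u powr (2*k*(H-\<beta>)) = u powr (2*H*k) / u powr (2*k*\<beta>)"
      by (subst powr_diff[symmetric]) (simp add: algebra_simps)
    then show ?thesis by simp
  qed
  also have "u powr (2*k*(H-\<beta>)) = ((1/2) powr (2*k*(H-\<beta>)))^n"
    unfolding u_def by (rule rpow_eq[symmetric])
  finally show ?thesis unfolding \<delta>_def t_def s_def by (simp add: ac_simps)
qed


lemma dyadic_in:
  assumes T: "T > 0" and j: "j < (2::nat)^n"
  shows "T * (real (j+1) / 2^n) \<in> {0..T}" "T * (real j / 2^n) \<in> {0..T}"
proof -
  have jle: "real (j+1) \<le> 2^n"
  proof -
    have "j + 1 \<le> 2^n" using j by simp
    then have "real (j+1) \<le> real (2^n)" by (simp only: of_nat_le_iff)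
    then show ?thesis by simp
  qed
  have q1: "real (j+1) / 2^n \<le> 1" using jle by simp
  have "real j \<le> 2^n" using jle by linarith
  then have q2: "real j / 2^n \<le> 1" by (simp add: divide_le_eq)
  have "T * (real (j+1) / 2^n) \<le> T * 1" using T q1 by (intro mult_left_mono) auto
  then show "T * (real (j+1) / 2^n) \<in> {0..T}" using T by simp
  have "T * (real j / 2^n) \<le> T * 1" using T q2 by (intro mult_left_mono) auto
  then show "T * (real j / 2^n) \<in> {0..T}" using T by simp
qed

lemma fbm_component_holder:
  fixes B :: "real \<Rightarrow> 'a \<Rightarrow> real ^ 'm::finite"
  assumes B: "is_fbm M H T B" and T: "T > 0" and \<beta>: "0 < \<beta>" "\<beta> < H"
  shows "AE \<omega> in M. continuous_on {0..T} (\<lambda>t. B t \<omega>) \<longrightarrow>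
     (\<exists>K\<ge>0. \<forall>s\<in>{0..T}. \<forall>t\<in>{0..T}. \<bar>B t \<omega> $ i - B s \<omega> $ i\<bar> \<le> K * \<bar>t - s\<bar> powr \<beta>)"
proof -
  have P: "prob_space M" using B unfolding is_fbm_def by blast
  interpret prob_space M by (rule P)
  have Bm: "\<And>t. t \<in> {0..T} \<Longrightarrow> B t \<in> borel_measurable M" using B unfolding is_fbm_def by blast
  obtain k :: nat where k: "1 / (2 * (H - \<beta>)) < real k" using reals_Archimedean2 by blast
  have Hb: "H - \<beta> > 0" using \<beta> by simp
  have k0: "k > 0" using k Hb by (cases k) auto
  have k1: "1 < 2 * real k * (H - \<beta>)" using k Hb by (simp add: field_simps)
  define \<rho> where "\<rho> = (1/2::real) powr (2 * real k * (H - \<beta>))"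
  have "\<rho> < (1/2) powr 1" unfolding \<rho>_def using k1 by (intro powr_less_mono') auto
  then have \<rho>1: "2 * \<rho> < 1" by simp
  have \<rho>0: "\<rho> \<ge> 0" by (simp add: \<rho>_def)
  define Cst where "Cst = fact (2*k) / (2^k * fact k) * T powr (2*H*k)"
  define r where "r = (1/2::real) powr \<beta>"
  define X where "X = (\<lambda>n j \<omega>. B (T * (real (j+1) / 2^n)) \<omega> $ i - B (T * (real j / 2^n)) \<omega> $ i)"
  define E where "E = (\<lambda>n j. {\<omega>\<in>space M. r^n \<le> \<bar>X n j \<omega>\<bar>})"
  define A where "A = (\<lambda>n. \<Union>j\<in>{..<(2::nat)^n}. E n j)"
  have Em: "E n j \<in> sets M" if "j < 2^n" for n j
  proof -
    have m1: "B (T * (real (j+1) / 2^n)) \<in> borel_measurable M" by (rule Bm[OF dyadic_in(1)[OF T that]])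
    have m2: "B (T * (real j / 2^n)) \<in> borel_measurable M" by (rule Bm[OF dyadic_in(2)[OF T that]])
    have vn: "(\<lambda>v::real^'m. v $ i) \<in> borel_measurable borel"
      by (intro borel_measurable_continuous_onI continuous_on_component continuous_on_id)
    have "(\<lambda>x. B (T * (real (j+1) / 2^n)) x $ i) \<in> borel_measurable M"
      using measurable_compose[OF m1 vn] by (simp add: o_def)
    moreover have "(\<lambda>x. B (T * (real j / 2^n)) x $ i) \<in> borel_measurable M"
      using measurable_compose[OF m2 vn] by (simp add: o_def)
    ultimately have "X n j \<in> borel_measurable M" unfolding X_def by measurable
    then show ?thesis unfolding E_def by measurable
  qed
  have Am: "A n \<in> sets M" for n unfolding A_def using Em by auto
  have Ab: "measure M (A n) \<le> Cst * (2 * \<rho>)^n" for n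
  proof -
    have "measure M (A n) \<le> (\<Sum>j\<in>{..<(2::nat)^n}. measure M (E n j))"
      unfolding A_def by (rule measure_UNION_le) (use Em in auto)
    also have "\<dots> \<le> (\<Sum>j\<in>{..<(2::nat)^n}. Cst * \<rho>^n)"
    proof (rule sum_mono)
      fix j assume "j \<in> {..<(2::nat)^n}"
      then have j: "j < 2^n" by simp
      show "measure M (E n j) \<le> Cst * \<rho>^n"
        unfolding E_def X_def r_def Cst_def \<rho>_def using per_j_bound[OF B T \<beta>(1) k0 j, of i] .
    qed
    also have "\<dots> = Cst * (2 * \<rho>)^n" by (simp add: power_mult_distrib)
    finally show ?thesis .
  qed
  have sm: "summable (\<lambda>n. measure M (A n))"
  proof (rule summable_comparison_test')
    show "summable (\<lambda>n. Cst * (2 * \<rho>)^n)" using \<rho>1 \<rho>0 by (intro summable_mult summable_geometric) simp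
    show "norm (measure M (A n)) \<le> Cst * (2 * \<rho>)^n" for n using Ab[of n] by simp
  qed
  have BC: "AE \<omega> in M. eventually (\<lambda>n. \<omega> \<in> space M - A n) sequentially"
    by (rule borel_cantelli_AE1[OF Am _ sm]) (simp add: emeasure_eq_measure)
  show ?thesis
  proof (rule eventually_mono[OF BC], intro impI)
    fix \<omega> assume ev: "eventually (\<lambda>n. \<omega> \<in> space M - A n) sequentially"
      and C: "continuous_on {0..T} (\<lambda>t. B t \<omega>)"
    obtain N where N: "\<And>n. n \<ge> N \<Longrightarrow> \<omega> \<in> space M - A n" using ev unfolding eventually_sequentially by blast
    define f where "f = (\<lambda>u. B (T * u) \<omega> $ i)"
    have Cf: "continuous_on {0..1} f"
    proof -
      have "continuous_on {0..1} (\<lambda>u. T * u)" by (intro continuous_intros)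
      moreover have "(\<lambda>u. T * u) ` {0..1} \<subseteq> {0..T}" using T by (auto simp: mult_le_cancel_left1)
      ultimately have "continuous_on {0..1} ((\<lambda>t. B t \<omega>) \<circ> (\<lambda>u. T * u))"
        by (intro continuous_on_compose continuous_on_subset[OF C])
      then show ?thesis unfolding f_def o_def by (intro continuous_on_component)
    qed
    have hyp: "\<forall>n\<ge>N. \<forall>j<2^n. \<bar>f (real (j+1) / 2^n) - f (real j / 2^n)\<bar> \<le> r^n"
    proof (intro allI impI)
      fix n j :: nat assume n: "N \<le> n" and j: "j < 2^n"
      have "\<omega> \<notin> E n j" using N[OF n] j unfolding A_def by auto
      moreover have "\<omega> \<in> space M" using N[OF n] by auto
      ultimately show "\<bar>f (real (j+1) / 2^n) - f (real j / 2^n)\<bar> \<le> r^n"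
        unfolding E_def X_def f_def by auto
    qed
    obtain K0 where K0: "\<forall>x\<in>{0..1}. \<forall>y\<in>{0..1}. \<bar>f x - f y\<bar> \<le> K0 * \<bar>x - y\<bar> powr \<beta>"
      using chaining[OF Cf \<beta>(1) r_def hyp] by blast
    show "\<exists>K\<ge>0. \<forall>s\<in>{0..T}. \<forall>t\<in>{0..T}. \<bar>B t \<omega> $ i - B s \<omega> $ i\<bar> \<le> K * \<bar>t - s\<bar> powr \<beta>"
    proof (intro exI conjI ballI)
      show "0 \<le> \<bar>K0\<bar> / T powr \<beta>" using T by simp
      fix s t assume s: "s \<in> {0..T}" and t: "t \<in> {0..T}"
      have x: "t / T \<in> {0..1}" "s / T \<in> {0..1}" using s t T by auto
      have "\<bar>B t \<omega> $ i - B s \<omega> $ i\<bar> = \<bar>f (t / T) - f (s / T)\<bar>" unfolding f_def using T by simp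
      also have "\<dots> \<le> K0 * \<bar>t / T - s / T\<bar> powr \<beta>" using K0 x by blast
      also have "\<dots> \<le> \<bar>K0\<bar> * \<bar>t / T - s / T\<bar> powr \<beta>" by (intro mult_right_mono) auto
      also have "\<bar>t / T - s / T\<bar> powr \<beta> = \<bar>t - s\<bar> powr \<beta> / T powr \<beta>"
        using T by (simp add: diff_divide_distrib[symmetric] powr_divide)
      finally show "\<bar>B t \<omega> $ i - B s \<omega> $ i\<bar> \<le> \<bar>K0\<bar> / T powr \<beta> * \<bar>t - s\<bar> powr \<beta>" by simp
    qed
  qed
qed



theorem mainTheorem5:
  fixes M :: "'a measure" and B :: "real \<Rightarrow> 'a \<Rightarrow> real ^ 'm::finite"
    and H T \<alpha> :: real
  assumes "1/2 < H" "H < 1" "T > 0"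
    and "is_fbm M H T B"
    and "1 - H < \<alpha>" "\<alpha> < 1/2"
  shows "AE \<omega> in M.
     (\<forall>n\<ge>1. W_space \<alpha> T (interp T n (\<lambda>t. B t \<omega>)) \<and>
             W_space \<alpha> T (\<lambda>t. interp T n (\<lambda>t. B t \<omega>) t - B t \<omega>)) \<and>
     (SUP n\<in>{1..}. Lambda \<alpha> T (interp T n (\<lambda>t. B t \<omega>))) < \<infinity> \<and>
     (\<lambda>n. Lambda \<alpha> T (\<lambda>t. interp T n (\<lambda>t. B t \<omega>) t - B t \<omega>)) \<longlonglongrightarrow> 0"
proof -
  note H1 = assms(1) and H2 = assms(2) and T = assms(3) and B = assms(4) and a1 = assms(5) and a2 = assms(6)
  have \<alpha>: "0 < \<alpha>" "\<alpha> < 1" using H2 a1 a2 by auto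
  define a where "a = H - (1 - \<alpha>)"
  have a0: "a > 0" using a1 by (simp add: a_def)
  define \<beta>' where "\<beta>' = 1 - \<alpha> + a / 3"
  define \<beta> where "\<beta> = 1 - \<alpha> + 2 * a / 3"
  have bb: "1 - \<alpha> < \<beta>'" "\<beta>' < \<beta>" "\<beta> \<le> 1" using a0 H2 by (auto simp: \<beta>'_def \<beta>_def a_def)
  have b0: "0 < \<beta>" "\<beta> < H" using a0 \<alpha> unfolding \<beta>_def a_def by (simp_all add: field_simps)
  have comp: "AE \<omega> in M. \<forall>i\<in>UNIV. continuous_on {0..T} (\<lambda>t. B t \<omega>) \<longrightarrow>
     (\<exists>K\<ge>0. \<forall>s\<in>{0..T}. \<forall>t\<in>{0..T}. \<bar>B t \<omega> $ i - B s \<omega> $ i\<bar> \<le> K * \<bar>t - s\<bar> powr \<beta>)"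
    by (rule AE_finite_allI) (use fbm_component_holder[OF B T b0] in auto)
  have cont: "AE \<omega> in M. continuous_on {0..T} (\<lambda>t. B t \<omega>)" using B unfolding is_fbm_def by blast
  show ?thesis
  proof (rule eventually_mono[OF eventually_conj[OF comp cont]])
    fix \<omega> assume h: "(\<forall>i\<in>UNIV. continuous_on {0..T} (\<lambda>t. B t \<omega>) \<longrightarrow>
     (\<exists>K\<ge>0. \<forall>s\<in>{0..T}. \<forall>t\<in>{0..T}. \<bar>B t \<omega> $ i - B s \<omega> $ i\<bar> \<le> K * \<bar>t - s\<bar> powr \<beta>))
     \<and> continuous_on {0..T} (\<lambda>t. B t \<omega>)"
    then have C: "continuous_on {0..T} (\<lambda>t. B t \<omega>)" by blast
    have "\<forall>i. \<exists>K. K \<ge> 0 \<and> (\<forall>s\<in>{0..T}. \<forall>t\<in>{0..T}. \<bar>B t \<omega> $ i - B s \<omega> $ i\<bar> \<le> K * \<bar>t - s\<bar> powr \<beta>)"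
      using h by blast
    then obtain Kf where Kf: "\<And>i. Kf i \<ge> 0" 
      "\<And>i s t. s \<in> {0..T} \<Longrightarrow> t \<in> {0..T} \<Longrightarrow> \<bar>B t \<omega> $ i - B s \<omega> $ i\<bar> \<le> Kf i * \<bar>t - s\<bar> powr \<beta>"
      by metis
    define K where "K = (\<Sum>i\<in>UNIV. Kf i)"
    have K0: "K \<ge> 0" unfolding K_def using Kf(1) by (simp add: sum_nonneg)
    have Hol: "holder_on {0..T} \<beta> K (\<lambda>t. B t \<omega>)"
      unfolding holder_on_def
    proof (intro ballI)
      fix s t assume s: "s \<in> {0..T}" and t: "t \<in> {0..T}"
      have "norm (B t \<omega> - B s \<omega>) \<le> (\<Sum>i\<in>UNIV. \<bar>(B t \<omega> - B s \<omega>) $ i\<bar>)" by (rule norm_le_l1_cart)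
      also have "\<dots> \<le> (\<Sum>i\<in>UNIV. Kf i * \<bar>t - s\<bar> powr \<beta>)"
        using Kf(2)[OF s t] by (intro sum_mono) simp
      also have "\<dots> = K * \<bar>t - s\<bar> powr \<beta>" unfolding K_def by (simp add: sum_distrib_right)
      finally show "norm (B t \<omega> - B s \<omega>) \<le> K * \<bar>t - s\<bar> powr \<beta>" .
    qed
    show "(\<forall>n\<ge>1. W_space \<alpha> T (interp T n (\<lambda>t. B t \<omega>)) \<and>
             W_space \<alpha> T (\<lambda>t. interp T n (\<lambda>t. B t \<omega>) t - B t \<omega>)) \<and>
     (SUP n\<in>{1..}. Lambda \<alpha> T (interp T n (\<lambda>t. B t \<omega>))) < \<infinity> \<and>
     (\<lambda>n. Lambda \<alpha> T (\<lambda>t. interp T n (\<lambda>t. B t \<omega>) t - B t \<omega>)) \<longlonglongrightarrow> 0"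
      using deterministic[OF \<alpha> bb T K0 Hol C] by simp
  qed
qed

end
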